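(* Let $b\ge 2$ and let $N$ be a $b$-wARH number with $k$ base-$b$ digits and with additive extra term $A$. Then $k\le A+4$.
   Context: Fix a base $b\ge 2$. $s_b(N)$ is the sum of the base-$b$ digits of $N$. For a positive integer $X$, its reversal $X^R$ is the integer whose base-$b$ representation is that of $X$ written in reverse order (leading zeros of the result are dropped). A positive integer $N$ is a $b$-wARH number if there exists an integer $A\ge 0$, called an additive extra term of $N$, such that $N=(A+s_b(N))+(A+s_b(N))^R$. *)

theory Defs
  imports Main
begin

fun digits :: "nat \<Rightarrow> nat \<Rightarrow> nat list" where
  "digits b n = (if b < 2 \<or> n = 0 then [] else n mod b # digits b (n div b))"

declare digits.simps[simp del]

fun from_digits :: "nat \<Rightarrow> nat list \<Rightarrow> nat" where
  "from_digits b [] = 0"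
| "from_digits b (d # ds) = d + b * from_digits b ds"

definition digit_sum :: "nat \<Rightarrow> nat \<Rightarrow> nat" where
  "digit_sum b n = sum_list (digits b n)"

text \<open>Reversal: the number whose base-b representation is that of n written backwards
  (leading zeros of the result drop out automatically).\<close>
definition rev_num :: "nat \<Rightarrow> nat \<Rightarrow> nat" where
  "rev_num b n = from_digits b (rev (digits b n))"

definition num_digits :: "nat \<Rightarrow> nat \<Rightarrow> nat" where
  "num_digits b n = length (digits b n)"

definition is_additive_extra_term :: "nat \<Rightarrow> nat \<Rightarrow> nat \<Rightarrow> bool" where
  "is_additive_extra_term b N A \<longleftrightarrow>
     N = (A + digit_sum b N) + rev_num b (A + digit_sum b N)"

definition is_wARH :: "nat \<Rightarrow> nat \<Rightarrow> bool" where
  "is_wARH b N \<longleftrightarrow> N > 0 \<and> (\<exists>A. is_additive_extra_term b N A)"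

end

theory Submission
  imports Defs
begin

lemma digits_0[simp]: "digits b 0 = []"
  by (subst digits.simps) simp

lemma digits_pos: "b \<ge> 2 \<Longrightarrow> n > 0 \<Longrightarrow> digits b n = n mod b # digits b (n div b)"
  by (subst digits.simps) simp

lemma list_sum_le: "\<forall>d\<in>set xs. d \<le> (c::nat) \<Longrightarrow> sum_list xs \<le> c * length xs"
  by (induction xs) auto

lemma digits_lt: "b \<ge> 2 \<Longrightarrow> n < b ^ length (digits b n)"
proof (induction b n rule: digits.induct)
  case (1 b n)
  show ?case
  proof (cases "n = 0")
    case True then show ?thesis by simp
  next
    case False
    then have d: "digits b n = n mod b # digits b (n div b)" using 1(2) digits_pos by simp
    have ih: "n div b < b ^ length (digits b (n div b))" using 1 False by auto
    have "n = n mod b + b * (n div b)" by simp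
    also have "\<dots> < b + b * (n div b)"
      by (rule add_less_mono1) (use 1(2) in simp)
    also have "\<dots> \<le> b * b ^ length (digits b (n div b))"
    proof -
      have "Suc (n div b) \<le> b ^ length (digits b (n div b))" using ih by simp
      then have "b * Suc (n div b) \<le> b * b ^ length (digits b (n div b))" by (rule mult_le_mono2)
      then show ?thesis by (simp only: mult_Suc_right)
    qed
    finally show ?thesis using d by simp
  qed
qed

lemma digits_ge: "b \<ge> 2 \<Longrightarrow> n > 0 \<Longrightarrow> b ^ (length (digits b n) - 1) \<le> n"
proof (induction b n rule: digits.induct)
  case (1 b n)
  then have d: "digits b n = n mod b # digits b (n div b)" using digits_pos by simp
  show ?case
  proof (cases "n div b = 0")
    case True
    then have "digits b (n div b) = []" by simp
    then show ?thesis using d 1 by simp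
  next
    case False
    then have ih: "b ^ (length (digits b (n div b)) - 1) \<le> n div b" using 1 by auto
    have "length (digits b (n div b)) > 0" using False 1(2) digits_pos by simp
    then have "b ^ (length (digits b n) - 1) = b * b ^ (length (digits b (n div b)) - 1)"
      using d by (cases "length (digits b (n div b))") auto
    also have "\<dots> \<le> b * (n div b)" using ih by simp
    also have "\<dots> \<le> n" by simp
    finally show ?thesis .
  qed
qed

lemma digits_set: "d \<in> set (digits b n) \<Longrightarrow> d < b"
proof (induction b n rule: digits.induct)
  case (1 b n)
  show ?case
  proof (cases "b < 2 \<or> n = 0")
    case True
    then have "digits b n = []" by (subst digits.simps) simp
    then show ?thesis using 1 by simp
  next
    case False
    then have "digits b n = n mod b # digits b (n div b)" by (subst digits.simps) simp
    then show ?thesis using 1 False by auto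
  qed
qed

lemma from_digits_lt: "b \<ge> 1 \<Longrightarrow> \<forall>d\<in>set ds. d < b \<Longrightarrow> from_digits b ds < b ^ length ds"
proof (induction ds)
  case Nil then show ?case by simp
next
  case (Cons d ds)
  then have ih: "Suc (from_digits b ds) \<le> b ^ length ds" and dl: "d < b" by auto
  have "d + b * from_digits b ds < b + b * from_digits b ds" using dl by simp
  also have "\<dots> = b * Suc (from_digits b ds)" by simp
  also have "\<dots> \<le> b * b ^ length ds" using ih by (rule mult_le_mono2)
  finally show ?case by simp
qed

lemma sum_le: "sum_list (digits b n) \<le> (b - 1) * length (digits b n)"
proof -
  have "\<forall>d\<in>set (digits b n). d \<le> b - 1" using digits_set by fastforce
  thus ?thesis using list_sum_le by blast
qed

lemma key_ineq: assumes "b \<ge> 2" "m \<ge> 4" shows "b * (m + 1) < b ^ (m - 1) + 5"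
  using assms(2)
proof (induction m rule: dec_induct)
  case base
  show ?case
  proof (cases "b \<ge> 5")
    case True
    have "5 \<le> b * b" using True le_square[of b] by linarith
    then have h: "5 * b \<le> b * b * b" by (rule mult_le_mono1)
    have "b ^ (4 - 1) = b * b * b" by (simp add: power3_eq_cube)
    moreover have "b * (4 + 1) = 5 * b" by simp
    ultimately show ?thesis using h by linarith
  next
    case False
    then have "b = 2 \<or> b = 3 \<or> b = 4" using assms(1) by auto
    then show ?thesis by auto
  qed
next
  case (step m)
  have "b ^ m = b * b ^ (m - 1)" using step(1)
    by (metis Suc_diff_1 less_le_trans numeral_less_iff power_Suc semiring_norm(76) zero_less_numeral)
  also have "\<dots> \<ge> 2 * b ^ (m - 1)" using assms(1) by simp
  finally have a: "b ^ m \<ge> 2 * b ^ (m - 1)" .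
  have "b ^ 1 \<le> b ^ (m - 1)" using step(1) assms(1) by (intro power_increasing) auto
  then have "b \<le> b ^ (m - 1)" by simp
  have "b * (Suc m + 1) = b * (m + 1) + b" by simp
  moreover have "Suc m - 1 = m" by simp
  moreover have "b * (m + 1) < b ^ (m - 1) + 5" using step(3) .
  ultimately show ?case using a \<open>b \<le> b ^ (m - 1)\<close> by simp
qed

theorem mainTheorem17:
  fixes b N A k :: nat
  assumes "b \<ge> 2"
    and "is_wARH b N"
    and "is_additive_extra_term b N A"
    and "num_digits b N = k"
  shows "k \<le> A + 4"
proof -
  define M where "M = A + digit_sum b N"
  define m where "m = length (digits b M)"
  have N: "N = M + rev_num b M" using assms(3) unfolding M_def is_additive_extra_term_def by simp
  have Npos: "N > 0" using assms(2) unfolding is_wARH_def by simp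
  have M1: "M < b ^ m" using digits_lt[OF assms(1)] m_def by simp
  have R1: "rev_num b M < b ^ m" unfolding rev_num_def m_def
    using from_digits_lt[of b "rev (digits b M)"] assms(1) digits_set by fastforce
  have "N < 2 * b ^ m" using N M1 R1 by simp
  also have "\<dots> \<le> b ^ (m + 1)" using assms(1) by simp
  finally have Nlt: "N < b ^ (m + 1)" .
  have "b ^ (k - 1) \<le> N" using digits_ge[OF assms(1) Npos] assms(4) num_digits_def by simp
  then have "b ^ (k - 1) < b ^ (m + 1)" using Nlt by simp
  then have "k - 1 < m + 1" by (rule power_less_imp_less_exp[rotated]) (use assms(1) in simp)
  then have km: "k \<le> m + 1" by simp
  show ?thesis
  proof (rule ccontr)
    assume "\<not> k \<le> A + 4"
    then have mA: "m \<ge> A + 4" using km by simp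
    then have "M > 0" using m_def by (cases "M = 0") auto
    then have "b ^ (m - 1) \<le> M" using digits_ge[OF assms(1)] m_def by simp
    also have "M \<le> A + (b - 1) * k" unfolding M_def digit_sum_def
      using sum_le[of b N] assms(4) num_digits_def by simp
    also have "\<dots> \<le> A + (b - 1) * (m + 1)" using mult_le_mono2[OF km, of "b - 1"] by simp
    finally have c: "b ^ (m - 1) \<le> A + (b - 1) * (m + 1)" .
    have "b * (m + 1) < b ^ (m - 1) + 5" using key_ineq assms(1) mA by simp
    moreover have "(b - 1) * (m + 1) + (m + 1) = b * (m + 1)"
    proof -
      obtain c where "b = Suc c" using assms(1) by (cases b) auto
      then show ?thesis by simp
    qed
    ultimately show False using c mA by linarith
  qed
qed

end
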